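(* For odd $N\ge5$ let $G_{N,1}$ be the graph with vertex set $\mathbb Z_N$ in which two distinct vertices $i,j$ are adjacent iff $j-i\not\equiv\pm1\pmod N$. Fix an integer $q\ge 1$ independent of $N$, and for each $N$ let $u,v\in\mathbb Z_N$ with $v-u\equiv q\pmod N$. Then the effective resistance $R^{(1)}(u,v)$ in $G_{N,1}$ satisfies \[ R^{(1)}(u,v)\sim\frac{2}{N}\qquad (N\to\infty \text{ through odd integers}). \]
   Context: Effective resistance is computed with unit conductance on every edge; $a_N\sim b_N$ means $a_N/b_N\to1$. *)

theory Defs
  imports "HOL-Analysis.Analysis" "HOL-Library.Landau_Symbols"
begin

text \<open>A finite simple graph given by a vertex set V and a symmetric irreflexive
  adjacency relation E; every edge has unit conductance.  The effective resistance
  between u and v is the potential difference phi u - phi v of any potential phi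
  on V solving the Kirchhoff equations (graph Laplacian L phi = 1_u - 1_v),
  i.e. unit current injected at u and extracted at v.\<close>

definition kirchhoff_potential :: "'a set \<Rightarrow> ('a \<Rightarrow> 'a \<Rightarrow> bool) \<Rightarrow> 'a \<Rightarrow> 'a \<Rightarrow> ('a \<Rightarrow> real) \<Rightarrow> bool" where
  "kirchhoff_potential V E u v phi \<longleftrightarrow>
     (\<forall>x\<in>V. (\<Sum>y\<in>{y\<in>V. E x y}. phi x - phi y) =
              (if x = u then 1 else 0) - (if x = v then 1 else 0))"

definition eff_resistance :: "'a set \<Rightarrow> ('a \<Rightarrow> 'a \<Rightarrow> bool) \<Rightarrow> 'a \<Rightarrow> 'a \<Rightarrow> real" where
  "eff_resistance V E u v =
     (THE r. \<exists>phi. kirchhoff_potential V E u v phi \<and> r = phi u - phi v)"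

definition ZN :: "nat \<Rightarrow> int set" where
  "ZN N = {0..<int N}"

definition G1_adj :: "nat \<Rightarrow> int \<Rightarrow> int \<Rightarrow> bool" where
  "G1_adj N i j \<longleftrightarrow> i \<noteq> j \<and> (j - i) mod int N \<noteq> 1 \<and> (j - i) mod int N \<noteq> (-1) mod int N"

end

theory Submission imports Defs "HOL-Real_Asymp.Real_Asymp" begin

primrec dser :: "nat \<Rightarrow> (int \<Rightarrow> real) \<Rightarrow> nat \<Rightarrow> int \<Rightarrow> real" where
  "dser N b 0 x = b x / (real N - 2)"
| "dser N b (Suc k) x = - (dser N b k ((x+1) mod int N) + dser N b k ((x-1) mod int N)) / (real N - 2)"

lemma dser_bound:
  assumes "N \<ge> 5" "\<forall>x. \<bar>b x\<bar> \<le> 1"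
  shows "\<bar>dser N b k x\<bar> \<le> (2/(real N - 2))^k / (real N - 2)"
proof (induction k arbitrary: x)
  case 0
  have D: "real N - 2 > 0" using assms by simp
  show ?case using assms D by (simp add: abs_divide divide_right_mono)
next
  case (Suc k)
  have D: "real N - 2 > 0" using assms by simp
  let ?x1 = "(x+1) mod int N" and ?x2 = "(x-1) mod int N"
  have "\<bar>dser N b (Suc k) x\<bar> = \<bar>dser N b k ?x1 + dser N b k ?x2\<bar> / (real N - 2)"
    using D by (simp add: abs_divide)
  also have "\<dots> \<le> (2*((2/(real N - 2))^k / (real N - 2))) / (real N - 2)"
    apply (rule divide_right_mono)
    using Suc.IH[of ?x1] Suc.IH[of ?x2] abs_triangle_ineq[of "dser N b k ?x1" "dser N b k ?x2"] D
    by linarith+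
  also have "\<dots> = (2/(real N - 2))^(Suc k) / (real N - 2)" by simp
  finally show ?case .
qed

lemma geo_summable:
  assumes "N \<ge> 5"
  shows "summable (\<lambda>k. (2/(real N - 2))^k / (real N - 2))"
  apply (rule summable_divide, rule summable_geometric) using assms by simp

lemma dser_summable:
  assumes "N \<ge> 5" "\<forall>x. \<bar>b x\<bar> \<le> 1"
  shows "summable (\<lambda>k. dser N b k x)" "summable (\<lambda>k. \<bar>dser N b k x\<bar>)"
proof -
  show "summable (\<lambda>k. dser N b k x)"
    by (rule summable_comparison_test[OF _ geo_summable[OF assms(1)]]) (use dser_bound[OF assms] in auto)
  show "summable (\<lambda>k. \<bar>dser N b k x\<bar>)"
    by (rule summable_comparison_test[OF _ geo_summable[OF assms(1)]]) (use dser_bound[OF assms] in auto)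
qed

definition phiS :: "nat \<Rightarrow> (int \<Rightarrow> real) \<Rightarrow> int \<Rightarrow> real" where
  "phiS N b x = (\<Sum>k. dser N b k x)"

lemma phiS_bound:
  assumes "N \<ge> 5" "\<forall>x. \<bar>b x\<bar> \<le> 1"
  shows "\<bar>phiS N b x\<bar> \<le> 1 / (real N - 4)"
proof -
  have D: "real N - 2 > 2" using assms by simp
  have "\<bar>phiS N b x\<bar> \<le> (\<Sum>k. \<bar>dser N b k x\<bar>)"
    unfolding phiS_def using summable_norm[of "\<lambda>k. dser N b k x"] dser_summable[OF assms] by simp
  also have "\<dots> \<le> (\<Sum>k. (2/(real N - 2))^k / (real N - 2))"
    by (rule suminf_le) (use dser_bound[OF assms] dser_summable[OF assms] geo_summable[OF assms(1)] in auto)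
  also have "\<dots> = (1 / (1 - 2/(real N - 2))) / (real N - 2)"
  proof -
    have "(\<Sum>k. (2/(real N - 2))^k) = 1 / (1 - 2/(real N - 2))"
      by (rule suminf_geometric) (use D in auto)
    moreover have "(\<Sum>k. (2/(real N - 2))^k / (real N - 2)) = (\<Sum>k. (2/(real N - 2))^k) / (real N - 2)"
      by (rule suminf_divide, rule summable_geometric) (use D in auto)
    ultimately show ?thesis by simp
  qed
  also have "\<dots> = 1 / (real N - 4)"
  proof -
    define E where "E = real N - 2"
    have E: "E > 2" using D E_def by simp
    have "1 - 2 / E = (E - 2) / E" using E by (simp add: field_simps)
    hence "(1 / (1 - 2/E)) / E = 1 / (E - 2)" using E by simp
    thus ?thesis unfolding E_def by simp
  qed
  finally show ?thesis .
qed

lemma phiS_eq: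
  assumes "N \<ge> 5" "\<forall>x. \<bar>b x\<bar> \<le> 1"
  shows "(real N - 2) * phiS N b x + phiS N b ((x+1) mod int N) + phiS N b ((x-1) mod int N) = b x"
proof -
  have D: "real N - 2 > 2" using assms by simp
  let ?x1 = "(x+1) mod int N" and ?x2 = "(x-1) mod int N"
  define SB where "SB = phiS N b ?x1"
  define SC where "SC = phiS N b ?x2"
  have "(\<lambda>k. dser N b k ?x1) sums SB" unfolding SB_def phiS_def
    using dser_summable[OF assms] by (simp add: summable_sums)
  moreover have "(\<lambda>k. dser N b k ?x2) sums SC" unfolding SC_def phiS_def
    using dser_summable[OF assms] by (simp add: summable_sums)
  ultimately have "(\<lambda>k. - (dser N b k ?x1 + dser N b k ?x2) / (real N - 2)) sums (- (SB + SC) / (real N - 2))"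
    by (intro sums_divide sums_minus sums_add)
  hence "(\<lambda>k. dser N b (Suc k) x) sums (- (SB + SC) / (real N - 2))" by simp
  hence "(\<lambda>k. dser N b k x) sums (- (SB + SC) / (real N - 2) + b x / (real N - 2))"
    using sums_Suc_iff[of "\<lambda>k. dser N b k x"] by simp
  hence "phiS N b x = - (SB + SC) / (real N - 2) + b x / (real N - 2)"
    unfolding phiS_def by (simp add: sums_iff)
  hence "(real N - 2) * phiS N b x = - (SB + SC) + b x" using D
    by (simp add: distrib_left)
  thus ?thesis unfolding SB_def[symmetric] SC_def[symmetric] by simp
qed

lemma shift_eq1:
  fixes x y n :: int
  assumes "n \<ge> 2" "0 \<le> y" "y < n"
  shows "(y - x) mod n = 1 \<longleftrightarrow> y = (x+1) mod n"
proof -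
  have "y = (x+1) mod n \<longleftrightarrow> y mod n = (x+1) mod n" using assms by simp
  also have "\<dots> \<longleftrightarrow> n dvd (y - (x+1))" by (rule mod_eq_dvd_iff)
  also have "\<dots> \<longleftrightarrow> (y - x) mod n = 1 mod n" by (subst mod_eq_dvd_iff) (simp add: algebra_simps)
  also have "1 mod n = 1" using assms by simp
  finally show ?thesis by simp
qed

lemma shift_eq2:
  fixes x y n :: int
  assumes "n \<ge> 2" "0 \<le> y" "y < n"
  shows "(y - x) mod n = (-1) mod n \<longleftrightarrow> y = (x-1) mod n"
proof -
  have "y = (x-1) mod n \<longleftrightarrow> y mod n = (x-1) mod n" using assms by simp
  also have "\<dots> \<longleftrightarrow> n dvd (y - (x-1))" by (rule mod_eq_dvd_iff)
  also have "\<dots> \<longleftrightarrow> (y - x) mod n = (-1) mod n" by (subst mod_eq_dvd_iff) (simp add: algebra_simps)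
  finally show ?thesis by simp
qed

lemma adj_set:
  assumes "N \<ge> 5" "x \<in> ZN N"
  shows "{y\<in>ZN N. G1_adj N x y} = ZN N - {x, (x+1) mod int N, (x-1) mod int N}"
  using shift_eq1[of "int N"] shift_eq2[of "int N"] assms
  unfolding G1_adj_def ZN_def by auto

lemma three_distinct:
  assumes "N \<ge> 5" "x \<in> ZN N"
  shows "x \<noteq> (x+1) mod int N" "x \<noteq> (x-1) mod int N" "(x+1) mod int N \<noteq> (x-1) mod int N"
    "(x+1) mod int N \<in> ZN N" "(x-1) mod int N \<in> ZN N"
proof -
  have n: "int N \<ge> 5" using assms by simp
  have xm: "x mod int N = x" using assms unfolding ZN_def by simp
  show "(x+1) mod int N \<in> ZN N" "(x-1) mod int N \<in> ZN N" unfolding ZN_def using n by auto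
  show "x \<noteq> (x+1) mod int N"
  proof
    assume "x = (x+1) mod int N"
    hence "x mod int N = (x+1) mod int N" using xm by simp
    hence "int N dvd (x - (x+1))" by (simp add: mod_eq_dvd_iff)
    thus False using n by simp
  qed
  show "x \<noteq> (x-1) mod int N"
  proof
    assume "x = (x-1) mod int N"
    hence "x mod int N = (x-1) mod int N" using xm by simp
    hence "int N dvd (x - (x-1))" by (simp add: mod_eq_dvd_iff)
    thus False using n by simp
  qed
  show "(x+1) mod int N \<noteq> (x-1) mod int N"
  proof
    assume "(x+1) mod int N = (x-1) mod int N"
    hence "int N dvd ((x+1) - (x-1))" by (simp add: mod_eq_dvd_iff)
    hence "int N dvd 2" by simp
    thus False using n zdvd_imp_le[of "int N" 2] by simp
  qed
qed

lemma L_formula: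
  assumes "N \<ge> 5" "x \<in> ZN N"
  shows "(\<Sum>y\<in>{y\<in>ZN N. G1_adj N x y}. f x - f y)
     = (real N - 2) * f x + f ((x+1) mod int N) + f ((x-1) mod int N) - sum f (ZN N)"
proof -
  let ?S = "{x, (x+1) mod int N, (x-1) mod int N}"
  note d = three_distinct[OF assms]
  have sub: "?S \<subseteq> ZN N" using d assms by auto
  have fin: "finite (ZN N)" unfolding ZN_def by simp
  have cS: "card ?S = 3" using d by simp
  have cV: "card (ZN N) = N" unfolding ZN_def by simp
  have "(\<Sum>y\<in>ZN N - ?S. f x - f y) = real (card (ZN N - ?S)) * f x - sum f (ZN N - ?S)"
    by (simp add: sum_subtractf)
  also have "card (ZN N - ?S) = N - 3" using card_Diff_subset[OF _ sub] cS cV by simp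
  also have "sum f (ZN N - ?S) = sum f (ZN N) - sum f ?S" using sum_diff[OF fin sub] by simp
  also have "sum f ?S = f x + f ((x+1) mod int N) + f ((x-1) mod int N)" using d by simp
  finally show ?thesis using adj_set[OF assms] assms by (simp add: of_nat_diff algebra_simps)
qed

lemma shift_sum:
  assumes "N \<ge> 5"
  shows "(\<Sum>x\<in>ZN N. f ((x+1) mod int N)) = sum f (ZN N)"
    "(\<Sum>x\<in>ZN N. f ((x-1) mod int N)) = sum f (ZN N)"
proof -
  have n: "int N > 0" using assms by simp
  have b1: "bij_betw (\<lambda>x. (x+1) mod int N) (ZN N) (ZN N)"
    by (rule bij_betw_byWitness[where f'="\<lambda>x. (x-1) mod int N"]) (use n in \<open>auto simp: ZN_def mod_simps\<close>)
  have b2: "bij_betw (\<lambda>x. (x-1) mod int N) (ZN N) (ZN N)"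
    by (rule bij_betw_byWitness[where f'="\<lambda>x. (x+1) mod int N"]) (use n in \<open>auto simp: ZN_def mod_simps\<close>)
  show "(\<Sum>x\<in>ZN N. f ((x+1) mod int N)) = sum f (ZN N)"
    using sum.reindex_bij_betw[OF b1, of f] by simp
  show "(\<Sum>x\<in>ZN N. f ((x-1) mod int N)) = sum f (ZN N)"
    using sum.reindex_bij_betw[OF b2, of f] by simp
qed


lemma max_principle:
  assumes "N \<ge> 5" "\<forall>x\<in>ZN N. (real N - 2) * w x + w ((x+1) mod int N) + w ((x-1) mod int N) = 0"
  shows "\<forall>x\<in>ZN N. w x = 0"
proof -
  have fin: "finite (ZN N)" and ne: "ZN N \<noteq> {}" using assms(1) unfolding ZN_def by auto
  define m where "m = Max ((\<lambda>y. \<bar>w y\<bar>) ` ZN N)"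
  have "m \<in> (\<lambda>y. \<bar>w y\<bar>) ` ZN N" unfolding m_def using fin ne by (intro Max_in) auto
  then obtain x0 where x0: "x0 \<in> ZN N" "m = \<bar>w x0\<bar>" by auto
  have le: "\<bar>w y\<bar> \<le> m" if "y \<in> ZN N" for y unfolding m_def using fin that by (intro Max_ge) auto
  note d = three_distinct[OF assms(1) x0(1)]
  have "(real N - 2) * w x0 = - (w ((x0+1) mod int N) + w ((x0-1) mod int N))"
  proof -
    have "(real N - 2) * w x0 + w ((x0+1) mod int N) + w ((x0-1) mod int N) = 0"
      using assms(2) x0(1) by blast
    thus ?thesis by linarith
  qed
  hence "(real N - 2) * \<bar>w x0\<bar> = \<bar>w ((x0+1) mod int N) + w ((x0-1) mod int N)\<bar>"
  proof -
    have "\<bar>(real N - 2) * w x0\<bar> = (real N - 2) * \<bar>w x0\<bar>" using assms(1) by (simp add: abs_mult)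
    thus ?thesis using \<open>(real N - 2) * w x0 = _\<close> by simp
  qed
  also have "\<dots> \<le> 2 * m" using le[OF d(4)] le[OF d(5)] by linarith
  finally have "(real N - 2) * m \<le> 2 * m" using x0 by simp
  hence "(real N - 4) * m \<le> 0" by (simp add: algebra_simps)
  moreover have "real N - 4 > 0" using assms(1) by simp
  ultimately have "m \<le> 0" by (simp add: mult_le_0_iff)
  thus ?thesis using le by force
qed


definition bvec :: "int \<Rightarrow> int \<Rightarrow> int \<Rightarrow> real" where
  "bvec u v x = (if x = u then 1 else 0) - (if x = v then 1 else 0)"

lemma bvec_bound: "\<forall>x. \<bar>bvec u v x\<bar> \<le> 1" unfolding bvec_def by auto

lemma resistance_value:
  assumes N: "N \<ge> 5" and uv: "u \<in> ZN N" "v \<in> ZN N"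
  shows "eff_resistance (ZN N) (G1_adj N) u v = phiS N (bvec u v) u - phiS N (bvec u v) v"
proof -
  define phi where "phi = phiS N (bvec u v)"
  have fin: "finite (ZN N)" unfolding ZN_def by simp
  have M: "(real N - 2) * phi x + phi ((x+1) mod int N) + phi ((x-1) mod int N) = bvec u v x" for x
    unfolding phi_def by (rule phiS_eq[OF N bvec_bound])
  have "(\<Sum>x\<in>ZN N. (real N - 2) * phi x + phi ((x+1) mod int N) + phi ((x-1) mod int N))
      = real N * sum phi (ZN N)"
  proof -
    have "(\<Sum>x\<in>ZN N. (real N - 2) * phi x + phi ((x+1) mod int N) + phi ((x-1) mod int N))
      = (\<Sum>x\<in>ZN N. (real N - 2) * phi x) + (\<Sum>x\<in>ZN N. phi ((x+1) mod int N)) + (\<Sum>x\<in>ZN N. phi ((x-1) mod int N))"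
      by (simp only: sum.distrib)
    also have "\<dots> = (real N - 2) * sum phi (ZN N) + sum phi (ZN N) + sum phi (ZN N)"
      by (simp only: shift_sum[OF N] sum_distrib_left)
    also have "\<dots> = real N * sum phi (ZN N)" by (simp add: algebra_simps)
    finally show ?thesis .
  qed
  moreover have "(\<Sum>x\<in>ZN N. bvec u v x) = 0"
    using uv fin by (simp add: bvec_def sum_subtractf)
  ultimately have "real N * sum phi (ZN N) = 0" using M by simp
  hence s0: "sum phi (ZN N) = 0" using N by simp
  have kp: "kirchhoff_potential (ZN N) (G1_adj N) u v phi"
    unfolding kirchhoff_potential_def
  proof
    fix x assume x: "x \<in> ZN N"
    show "(\<Sum>y\<in>{y\<in>ZN N. G1_adj N x y}. phi x - phi y) = (if x = u then 1 else 0) - (if x = v then 1 else 0)"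
      using L_formula[OF N x, of phi] s0 M[of x] by (simp add: bvec_def)
  qed
  have uniq: "psi u - psi v = phi u - phi v" if kpsi: "kirchhoff_potential (ZN N) (G1_adj N) u v psi" for psi
  proof -
    define s where "s = sum psi (ZN N)"
    define w where "w y = phi y - psi y + s / real N" for y
    have Mpsi: "(real N - 2) * psi x + psi ((x+1) mod int N) + psi ((x-1) mod int N) - s = bvec u v x"
      if x: "x \<in> ZN N" for x
      using kpsi x L_formula[OF N x, of psi] unfolding kirchhoff_potential_def s_def bvec_def by auto
    have "\<forall>x\<in>ZN N. (real N - 2) * w x + w ((x+1) mod int N) + w ((x-1) mod int N) = 0"
    proof
      fix x assume x: "x \<in> ZN N"
      have "(real N - 2) * w x + w ((x+1) mod int N) + w ((x-1) mod int N)
          = ((real N - 2) * phi x + phi ((x+1) mod int N) + phi ((x-1) mod int N))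
            - ((real N - 2) * psi x + psi ((x+1) mod int N) + psi ((x-1) mod int N) - s)
            - s + real N * (s / real N)"
        unfolding w_def by (simp add: algebra_simps)
      also have "\<dots> = 0" using M[of x] Mpsi[OF x] N by simp
      finally show "(real N - 2) * w x + w ((x+1) mod int N) + w ((x-1) mod int N) = 0" .
    qed
    hence "\<forall>x\<in>ZN N. w x = 0" by (rule max_principle[OF N])
    hence "w u = 0" "w v = 0" using uv by auto
    thus ?thesis unfolding w_def by simp
  qed
  show ?thesis unfolding eff_resistance_def phi_def[symmetric]
  proof (rule the_equality)
    show "\<exists>phia. kirchhoff_potential (ZN N) (G1_adj N) u v phia \<and> phi u - phi v = phia u - phia v"
      using kp by blast
    show "\<And>r. \<exists>phia. kirchhoff_potential (ZN N) (G1_adj N) u v phia \<and> r = phia u - phia v \<Longrightarrow> r = phi u - phi v"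
      using uniq by blast
  qed
qed

lemma resistance_bound:
  assumes N: "N \<ge> 5" and uv: "u \<in> ZN N" "v \<in> ZN N" "u \<noteq> v"
  shows "\<bar>eff_resistance (ZN N) (G1_adj N) u v - 2 / (real N - 2)\<bar> \<le> 4 / ((real N - 4) * (real N - 2))"
proof -
  define phi where "phi = phiS N (bvec u v)"
  have M: "(real N - 2) * phi x + phi ((x+1) mod int N) + phi ((x-1) mod int N) = bvec u v x" for x
    unfolding phi_def by (rule phiS_eq[OF N bvec_bound])
  have B: "\<bar>phi x\<bar> \<le> 1 / (real N - 4)" for x unfolding phi_def by (rule phiS_bound[OF N bvec_bound])
  have D: "real N - 2 > 0" using N by simp
  define T where "T = phi ((u+1) mod int N) + phi ((u-1) mod int N) - phi ((v+1) mod int N) - phi ((v-1) mod int N)"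
  have "(real N - 2) * (phi u - phi v) = 2 - T"
    using M[of u] M[of v] uv unfolding T_def bvec_def by (simp add: algebra_simps)
  hence "phi u - phi v = (2 - T) / (real N - 2)" using D
    by (simp add: eq_divide_eq mult.commute)
  hence eq: "phi u - phi v - 2 / (real N - 2) = - T / (real N - 2)"
    by (simp add: diff_divide_distrib)
  have "\<bar>T\<bar> \<le> 4 / (real N - 4)"
    using B[of "(u+1) mod int N"] B[of "(u-1) mod int N"] B[of "(v+1) mod int N"] B[of "(v-1) mod int N"]
    unfolding T_def by (simp add: abs_le_iff)
  hence "\<bar>- T / (real N - 2)\<bar> \<le> (4 / (real N - 4)) / (real N - 2)"
  proof -
    have "\<bar>T\<bar> / (real N - 2) \<le> (4 / (real N - 4)) / (real N - 2)"
      by (rule divide_right_mono) (use \<open>\<bar>T\<bar> \<le> _\<close> D in auto)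
    thus ?thesis using D by (simp only: abs_divide abs_minus_cancel)
  qed
  thus ?thesis using resistance_value[OF N uv(1,2)] eq phi_def by simp
qed

theorem mainTheorem11:
  fixes q :: nat and u v :: "nat \<Rightarrow> int"
  assumes "q \<ge> 1"
    and "\<And>N. odd N \<Longrightarrow> N \<ge> 5 \<Longrightarrow> u N \<in> ZN N \<and> v N \<in> ZN N \<and> (v N - u N) mod int N = int q mod int N"
  shows "(\<lambda>N. eff_resistance (ZN N) (G1_adj N) (u N) (v N))
           \<sim>[inf at_top (principal {N. odd N})] (\<lambda>N. 2 / real N)"
proof -
  let ?F = "inf at_top (principal {N::nat. odd N})"
  define R where "R N = eff_resistance (ZN N) (G1_adj N) (u N) (v N)" for N
  define Lo where "Lo N = real N * (2 / (real N - 2) - 4 / ((real N - 4) * (real N - 2))) / 2" for N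
  define Up where "Up N = real N * (2 / (real N - 2) + 4 / ((real N - 4) * (real N - 2))) / 2" for N
  have "(Lo \<longlongrightarrow> 1) at_top" unfolding Lo_def by real_asymp
  hence L: "(Lo \<longlongrightarrow> 1) ?F" by (rule tendsto_mono[rotated]) simp
  have "(Up \<longlongrightarrow> 1) at_top" unfolding Up_def by real_asymp
  hence U: "(Up \<longlongrightarrow> 1) ?F" by (rule tendsto_mono[rotated]) simp
  have ev: "eventually (\<lambda>N. Lo N \<le> R N / (2 / real N) \<and> R N / (2 / real N) \<le> Up N) ?F"
    unfolding eventually_inf_principal
  proof (rule eventually_mono[OF eventually_ge_at_top[of "max 5 (q+1)"]], intro impI)
    fix N assume N: "max 5 (q+1) \<le> N" and odd: "N \<in> {N. odd N}"
    have N5: "N \<ge> 5" using N by simp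
    note h = assms(2)[of N] odd N5
    have qN: "int q mod int N = int q" using N by simp
    have "u N \<noteq> v N"
    proof
      assume "u N = v N"
      hence "int q mod int N = 0" using h by auto
      thus False using qN assms(1) by simp
    qed
    hence b: "\<bar>R N - 2 / (real N - 2)\<bar> \<le> 4 / ((real N - 4) * (real N - 2))"
      unfolding R_def using resistance_bound[OF N5] h by auto
    have eqd: "R N / (2 / real N) = real N * R N / 2" using N5 by simp
    have pos: "real N / 2 \<ge> 0" by simp
    from b have "2 / (real N - 2) - 4 / ((real N - 4) * (real N - 2)) \<le> R N"
      "R N \<le> 2 / (real N - 2) + 4 / ((real N - 4) * (real N - 2))" by (auto simp: abs_le_iff)
    hence "real N / 2 * (2 / (real N - 2) - 4 / ((real N - 4) * (real N - 2))) \<le> real N / 2 * R N"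
      "real N / 2 * R N \<le> real N / 2 * (2 / (real N - 2) + 4 / ((real N - 4) * (real N - 2)))"
      using mult_left_mono pos by blast+
    thus "Lo N \<le> R N / (2 / real N) \<and> R N / (2 / real N) \<le> Up N"
      unfolding Lo_def Up_def eqd by simp
  qed
  have "((\<lambda>N. R N / (2 / real N)) \<longlongrightarrow> 1) ?F"
    by (rule tendsto_sandwich[OF _ _ L U]) (use ev in \<open>auto elim: eventually_mono\<close>)
  hence "R \<sim>[?F] (\<lambda>N. 2 / real N)" by (rule asymp_equivI')
  thus ?thesis unfolding R_def .
qed

end
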